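(* Let $\pi\in S_k$ and let $[\overline{\pi}]\subseteq\overline{S_k}$ be the set of totally vincular patterns corresponding to the rotations of $\pi$. Then $\Pi=\overline{S_k}\setminus[\overline{\pi}]$ is a maximum avoidable subset of $\overline{S_k}$, i.e. it is avoidable and no avoidable subset of $\overline{S_k}$ has larger cardinality.
   Context: For $\sigma\in S_n$, the cyclic permutation $[\sigma]$ is the set of all rotations of $\sigma$. For $\pi\in S_k$, the totally vincular pattern $\overline{\pi}$ is $\pi$ with all adjacent positions overlined; a cyclic permutation $[\sigma]$ of length $n\ge k$ contains $\overline{\pi}$ if some $k$ cyclically consecutive entries of $\sigma$ are order-isomorphic to $\pi$. $\overline{S_k}$ is the set of totally vincular patterns of length $k$. For $\Pi\subseteq\overline{S_k}$, $\mathrm{Av}_n[\Pi]$ is the set of cyclic permutations of length $n$ containing no pattern of $\Pi$. $\Pi$ is unavoidable if $|\mathrm{Av}_n[\Pi]|=0$ for all sufficiently large $n$, and avoidable otherwise. *)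

theory Defs
  imports Main
begin

definition perms :: "nat \<Rightarrow> nat list set" where
  "perms n = {xs. distinct xs \<and> set xs = {0..<n}}"

definition order_iso :: "nat list \<Rightarrow> nat list \<Rightarrow> bool" where
  "order_iso xs ys \<longleftrightarrow> length xs = length ys \<and>
     (\<forall>i<length xs. \<forall>j<length xs. xs ! i < xs ! j \<longleftrightarrow> ys ! i < ys ! j)"

definition cyc :: "nat list \<Rightarrow> nat list set" where
  "cyc \<sigma> = range (\<lambda>i. rotate i \<sigma>)"

text \<open>Totally vincular patterns of length k are identified with S_k = perms k.\<close>
definition cyc_contains :: "nat list \<Rightarrow> nat list \<Rightarrow> bool" where
  "cyc_contains \<sigma> p \<longleftrightarrow> length p \<le> length \<sigma> \<and>
     (\<exists>i<length \<sigma>. order_iso (take (length p) (rotate i \<sigma>)) p)"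

definition Av :: "nat \<Rightarrow> nat list set \<Rightarrow> nat list set set" where
  "Av n \<Pi> = {cyc \<sigma> | \<sigma>. \<sigma> \<in> perms n \<and> (\<forall>p\<in>\<Pi>. \<not> cyc_contains \<sigma> p)}"

definition unavoidable :: "nat list set \<Rightarrow> bool" where
  "unavoidable \<Pi> \<longleftrightarrow> (\<exists>N. \<forall>n\<ge>N. card (Av n \<Pi>) = 0)"

definition avoidable :: "nat list set \<Rightarrow> bool" where
  "avoidable \<Pi> \<longleftrightarrow> \<not> unavoidable \<Pi>"

end

theory Submission
  imports Defs
begin

lemma perm_len: "xs \<in> perms n \<Longrightarrow> length xs = n"
  unfolding perms_def by (metis (mono_tags, lifting) card_atLeastLessThan diff_zero distinct_card mem_Collect_eq)

lemma perm_fill: "distinct xs \<Longrightarrow> set xs \<subseteq> {0..<length xs} \<Longrightarrow> xs \<in> perms (length xs)"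
  unfolding perms_def using card_subset_eq[of "{0..<length xs}" "set xs"] distinct_card[of xs] by auto

lemma perm_card_less:
  assumes p: "p \<in> perms k" and v: "v \<le> k"
  shows "card {s. s<k \<and> p!s < v} = v"
proof -
  have len: "length p = k" using perm_len p by auto
  have d: "distinct p" and sp: "set p = {0..<k}" using p unfolding perms_def by auto
  have im: "(\<lambda>s. p!s) ` {s. s<k \<and> p!s<v} = {0..<v}"
  proof
    show "(\<lambda>s. p!s) ` {s. s<k \<and> p!s<v} \<subseteq> {0..<v}" by auto
    show "{0..<v} \<subseteq> (\<lambda>s. p!s) ` {s. s<k \<and> p!s<v}"
    proof
      fix x assume "x \<in> {0..<v}"
      then have "x \<in> set p" "x < v" using sp v by auto
      then obtain s where "s < length p" "p!s = x" by (metis in_set_conv_nth)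
      then show "x \<in> (\<lambda>s. p!s) ` {s. s<k \<and> p!s<v}" using len \<open>x<v\<close> by auto
    qed
  qed
  have "inj_on (\<lambda>s. p!s) {s. s<k \<and> p!s<v}"
    using d len by (auto simp: inj_on_def nth_eq_iff_index_eq)
  then show ?thesis using card_image im by fastforce
qed

lemma iso_perm_eq:
  assumes p: "p\<in>perms k" and q: "q\<in>perms k" and iso: "order_iso p q"
  shows "p = q"
proof (rule nth_equalityI)
  show lp: "length p = length q" using p q perm_len by auto
  fix t assume t: "t < length p"
  have lk: "length p = k" using p perm_len by auto
  have "p!t \<in> set p" "q!t \<in> set q" using t lp by auto
  then have pt: "p!t \<le> k" "q!t \<le> k" using p q unfolding perms_def by auto
  have "{s. s<k \<and> p!s < p!t} = {s. s<k \<and> q!s < q!t}"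
    using iso t lk unfolding order_iso_def by auto
  then show "p!t = q!t" using perm_card_less[OF p pt(1)] perm_card_less[OF q pt(2)] by simp
qed

lemma iso_trans_sym: "order_iso a b \<Longrightarrow> order_iso a c \<Longrightarrow> order_iso b c"
  unfolding order_iso_def by auto

lemma std:
  assumes d: "distinct xs"
  shows "\<exists>p\<in>perms (length xs). order_iso xs p"
proof -
  define f where "f x = card {y\<in>set xs. y<x}" for x
  have mono: "x < x' \<longleftrightarrow> f x < f x'" if "x \<in> set xs" "x' \<in> set xs" for x x'
  proof
    assume "x < x'"
    then have "{y\<in>set xs. y<x} \<subset> {y\<in>set xs. y<x'}" using that by auto
    then show "f x < f x'" unfolding f_def by (simp add: psubset_card_mono)
  next
    assume "f x < f x'"
    show "x < x'"
    proof (rule ccontr)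
      assume "\<not> x < x'"
      then have "{y\<in>set xs. y<x'} \<subseteq> {y\<in>set xs. y<x}" by auto
      then have "f x' \<le> f x" unfolding f_def by (simp add: card_mono)
      then show False using \<open>f x < f x'\<close> by simp
    qed
  qed
  define p where "p = map f xs"
  have inj: "inj_on f (set xs)"
    unfolding inj_on_def by (metis mono linorder_neq_iff less_irrefl)
  have dp: "distinct p" unfolding p_def using d inj by (simp add: distinct_map)
  have bnd: "f x < length xs" if "x \<in> set xs" for x
  proof -
    have "{y\<in>set xs. y<x} \<subseteq> set xs - {x}" by auto
    then have "f x \<le> card (set xs - {x})" unfolding f_def by (simp add: card_mono)
    also have "\<dots> < card (set xs)" using card_Diff1_less[OF finite_set that] .
    finally show ?thesis using distinct_card[OF d] by simp
  qed
  have "set p \<subseteq> {0..<length p}" unfolding p_def using bnd by auto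
  then have "p \<in> perms (length xs)" using perm_fill[OF dp] unfolding p_def by simp
  moreover have "order_iso xs p"
    unfolding order_iso_def p_def using mono by auto
  ultimately show ?thesis by blast
qed

lemma Av_fin: "finite (Av n \<Pi>)"
proof -
  have "perms n \<subseteq> {xs. set xs \<subseteq> {0..<n} \<and> length xs = n}" using perm_len unfolding perms_def by auto
  then have "finite (perms n)" using finite_lists_length_eq[of "{0..<n}" n] finite_subset by blast
  moreover have "Av n \<Pi> \<subseteq> cyc ` perms n" unfolding Av_def by auto
  ultimately show ?thesis using finite_subset by blast
qed

lemma perms_fin: "finite (perms n)"
proof -
  have "perms n \<subseteq> {xs. set xs \<subseteq> {0..<n} \<and> length xs = n}" using perm_len unfolding perms_def by auto
  then show "finite (perms n)" using finite_lists_length_eq[of "{0..<n}" n] finite_subset by blast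
qed

lemma key_ineq:
  fixes a b q q' m :: nat
  assumes "a \<noteq> b" "q < m" "q' < m"
  shows "(a*m+q < b*m+q') \<longleftrightarrow> a < b"
proof (cases "a < b")
  case True
  then have "Suc a * m \<le> b * m" by (intro mult_le_mono1) simp
  then show ?thesis using True assms by simp
next
  case False
  then have "b < a" using assms by simp
  then have "Suc b * m \<le> a * m" by (intro mult_le_mono1) simp
  then show ?thesis using False assms by simp
qed

lemma constr:
  assumes pi: "\<pi> \<in> perms k" and k: "k \<ge> 1" and m: "m \<ge> 1"
  shows "\<exists>\<sigma>\<in>perms (m*k). \<forall>i<m*k. \<exists>r. order_iso (take k (rotate i \<sigma>)) (rotate r \<pi>)"
proof -
  have lpi: "length \<pi> = k" using pi perm_len by auto
  have dpi: "distinct \<pi>" and spi: "set \<pi> = {0..<k}" using pi unfolding perms_def by auto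
  have pilt: "\<pi>!r < k" if "r < k" for r using that lpi spi nth_mem by fastforce
  define g where "g j = \<pi>!(j mod k) * m + j div k" for j
  define \<sigma> where "\<sigma> = map g [0..<m*k]"
  have ls: "length \<sigma> = m*k" unfolding \<sigma>_def by simp
  have divlt: "j div k < m" if "j < m*k" for j using that
    by (simp add: less_mult_imp_div_less)
  have inj: "inj_on g {0..<m*k}"
  proof (rule inj_onI)
    fix a b assume a: "a \<in> {0..<m*k}" and b: "b \<in> {0..<m*k}" and e: "g a = g b"
    have qa: "a div k < m" "b div k < m" using a b divlt by auto
    have "g a div m = \<pi>!(a mod k)" "g b div m = \<pi>!(b mod k)" "g a mod m = a div k" "g b mod m = b div k"
      unfolding g_def using qa m by auto
    then have "\<pi>!(a mod k) = \<pi>!(b mod k)" "a div k = b div k" using e by metis+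
    then have "a mod k = b mod k" using dpi lpi k by (simp add: nth_eq_iff_index_eq)
    then show "a = b" using \<open>a div k = b div k\<close> by (metis div_mult_mod_eq)
  qed
  have ds: "distinct \<sigma>" unfolding \<sigma>_def using inj by (simp add: distinct_map)
  have glt: "g j < m*k" if "j < m*k" for j
  proof -
    have A: "\<pi>!(j mod k) < k" using pilt k by simp
    have "g j < \<pi>!(j mod k) * m + m" unfolding g_def using divlt[OF that] by simp
    also have "\<dots> = Suc (\<pi>!(j mod k)) * m" by simp
    also have "\<dots> \<le> k * m" using A by (intro mult_le_mono1) simp
    finally show ?thesis by (simp add: mult.commute)
  qed
  have "set \<sigma> \<subseteq> {0..<length \<sigma>}" using glt ls unfolding \<sigma>_def by auto
  then have sp: "\<sigma> \<in> perms (m*k)" using perm_fill[OF ds] ls by simp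
  have "order_iso (take k (rotate i \<sigma>)) (rotate i \<pi>)" if i: "i < m*k" for i
  proof -
    have mk: "k \<le> m*k" using m by simp
    have ent: "take k (rotate i \<sigma>) ! t = rotate i \<pi> ! t * m + ((i+t) mod (m*k)) div k" if t: "t < k" for t
    proof -
      have tl: "t < length \<sigma>" using t mk ls by linarith
      have "take k (rotate i \<sigma>) ! t = \<sigma> ! ((i+t) mod (m*k))"
        using t nth_rotate[OF tl, of i] ls by simp
      also have "\<dots> = g ((i+t) mod (m*k))" unfolding \<sigma>_def using m k
        by (simp add: ls)
      also have "((i+t) mod (m*k)) mod k = (i+t) mod k" by (simp add: mod_mod_cancel)
      then have "g ((i+t) mod (m*k)) = \<pi>!((i+t) mod k) * m + ((i+t) mod (m*k)) div k"
        unfolding g_def by simp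
      also have "\<pi>!((i+t) mod k) = rotate i \<pi> ! t" using t lpi by (simp add: nth_rotate)
      finally show ?thesis .
    qed
    have ql: "((i+t) mod (m*k)) div k < m" for t
      using divlt m k by simp
    have dr: "distinct (rotate i \<pi>)" "length (rotate i \<pi>) = k" using dpi lpi by auto
    show ?thesis unfolding order_iso_def
    proof (intro conjI allI impI)
      show "length (take k (rotate i \<sigma>)) = length (rotate i \<pi>)" using mk ls lpi by simp
      fix s t assume s: "s < length (take k (rotate i \<sigma>))" and t: "t < length (take k (rotate i \<sigma>))"
      then have s': "s < k" and t': "t < k" using mk ls by auto
      show "(take k (rotate i \<sigma>) ! s < take k (rotate i \<sigma>) ! t) = (rotate i \<pi> ! s < rotate i \<pi> ! t)"
      proof (cases "s = t")
        case True then show ?thesis by simp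
      next
        case False
        then have "rotate i \<pi> ! s \<noteq> rotate i \<pi> ! t" using dr s' t' by (simp add: nth_eq_iff_index_eq)
        then show ?thesis using ent[OF s'] ent[OF t'] key_ineq ql by simp
      qed
    qed
  qed
  then show ?thesis using sp by blast
qed


lemma max_part:
  assumes sub: "\<Pi> \<subseteq> perms k" and av: "avoidable \<Pi>" and k: "k \<ge> 1"
  shows "card \<Pi> + k \<le> card (perms k)"
proof -
  obtain n where n: "n \<ge> k" "card (Av n \<Pi>) \<noteq> 0"
    using av unfolding avoidable_def unavoidable_def by blast
  then have "Av n \<Pi> \<noteq> {}" by auto
  then obtain \<sigma> where sp: "\<sigma> \<in> perms n" and avd: "\<forall>p\<in>\<Pi>. \<not> cyc_contains \<sigma> p"
    unfolding Av_def by auto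
  have ls: "length \<sigma> = n" using sp perm_len by auto
  have ds: "distinct \<sigma>" and ss: "set \<sigma> = {0..<n}" using sp unfolding perms_def by auto
  have n1: "n \<ge> 1" using n k by simp
  then have "n - 1 \<in> set \<sigma>" using ss by auto
  then obtain i0 where i0: "i0 < n" "\<sigma>!i0 = n - 1" using ls by (metis in_set_conv_nth)
  define W where "W j = take k (rotate ((i0+n-j) mod n) \<sigma>)" for j
  have Wprops: "length (W j) = k \<and> distinct (W j) \<and> W j ! j = n - 1 \<and> (\<forall>t<k. t \<noteq> j \<longrightarrow> W j ! t < n - 1)"
    if j: "j < k" for j
  proof -
    have lW: "length (W j) = k" unfolding W_def using ls n by simp
    have dW: "distinct (W j)" unfolding W_def using ds by simp
    have jl: "j < length \<sigma>" using j n ls by simp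
    have "W j ! j = rotate ((i0+n-j) mod n) \<sigma> ! j" unfolding W_def using j by simp
    also have "\<dots> = \<sigma> ! (((i0+n-j) mod n + j) mod n)" using nth_rotate[OF jl] ls by simp
    also have "((i0+n-j) mod n + j) mod n = (i0 + n - j + j) mod n" by (simp add: mod_add_left_eq)
    also have "i0 + n - j + j = i0 + n" using j n by simp
    also have "(i0 + n) mod n = i0" using i0 by simp
    finally have Wj: "W j ! j = n - 1" using i0 by simp
    have "W j ! t < n - 1" if t: "t < k" "t \<noteq> j" for t
    proof -
      have "W j ! t \<noteq> W j ! j" using dW lW t j by (simp add: nth_eq_iff_index_eq)
      moreover have "W j ! t \<in> set (W j)" using t lW by simp
      then have "W j ! t \<in> set \<sigma>" unfolding W_def using set_take_subset by fastforce
      ultimately show ?thesis using ss Wj by auto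
    qed
    then show ?thesis using lW dW Wj by blast
  qed
  have "\<forall>j<k. \<exists>p. p \<in> perms k \<and> order_iso (W j) p"
  proof (intro allI impI)
    fix j assume "j < k"
    then have "length (W j) = k" "distinct (W j)" using Wprops by auto
    then show "\<exists>p. p \<in> perms k \<and> order_iso (W j) p" using std[of "W j"] by auto
  qed
  then obtain P where P: "\<And>j. j<k \<Longrightarrow> P j \<in> perms k \<and> order_iso (W j) (P j)" by metis
  have Pmax: "P j ! t < P j ! j" if "j<k" "t<k" "t\<noteq>j" for j t
  proof -
    have o: "order_iso (W j) (P j)" and lw: "length (W j) = k" using P[OF that(1)] Wprops[OF that(1)] by auto
    have "W j ! t < W j ! j" using Wprops[OF that(1)] that by auto
    then show ?thesis using o lw that unfolding order_iso_def by blast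
  qed
  have Pn: "P j \<notin> \<Pi>" if j: "j<k" for j
  proof
    assume "P j \<in> \<Pi>"
    moreover have "cyc_contains \<sigma> (P j)"
      unfolding cyc_contains_def
    proof
      have lp: "length (P j) = k" using P[OF j] perm_len by auto
      show "length (P j) \<le> length \<sigma>" using lp ls n by simp
      show "\<exists>i<length \<sigma>. order_iso (take (length (P j)) (rotate i \<sigma>)) (P j)"
        using P[OF j] lp ls n1 unfolding W_def by (intro exI[of _ "(i0+n-j) mod n"]) auto
    qed
    ultimately show False using avd by blast
  qed
  have inj: "inj_on P {0..<k}"
    by (rule inj_onI) (metis Pmax atLeastLessThan_iff order.asym)
  have PS: "P ` {0..<k} \<subseteq> perms k - \<Pi>" using P Pn by auto
  have cP: "card (P ` {0..<k}) = k" using card_image[OF inj] by simp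
  have "\<Pi> \<subseteq> perms k - P ` {0..<k}" using sub PS by auto
  then have "card \<Pi> \<le> card (perms k - P ` {0..<k})" using perms_fin by (simp add: card_mono)
  also have "\<dots> = card (perms k) - k"
  proof -
    have "P ` {0..<k} \<subseteq> perms k" using PS by auto
    then show ?thesis using card_Diff_subset[of "P ` {0..<k}" "perms k"] cP by simp
  qed
  moreover have "k \<le> card (perms k)" using PS cP perms_fin card_mono[of "perms k" "P ` {0..<k}"] by auto
  ultimately show ?thesis by linarith
qed

lemma cyc_card: assumes "length \<pi> = k" "k \<ge> 1" shows "card (cyc \<pi>) \<le> k \<and> finite (cyc \<pi>)"
proof -
  have "cyc \<pi> \<subseteq> (\<lambda>i. rotate i \<pi>) ` {0..<k}"
  proof
    fix x assume "x \<in> cyc \<pi>"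
    then obtain i where x: "x = rotate i \<pi>" unfolding cyc_def by auto
    then have "x = rotate (i mod k) \<pi>" using assms rotate_conv_mod by metis
    moreover have "i mod k \<in> {0..<k}" using assms by simp
    ultimately show "x \<in> (\<lambda>i. rotate i \<pi>) ` {0..<k}" by blast
  qed
  moreover then have "card (cyc \<pi>) \<le> card ((\<lambda>i. rotate i \<pi>) ` {0..<k})" by (simp add: card_mono)
  moreover have "card ((\<lambda>i. rotate i \<pi>) ` {0..<k}) \<le> k" using card_image_le[of "{0..<k}"] by simp
  ultimately show ?thesis using finite_subset by fastforce
qed

theorem proposition7p2:
  fixes \<pi> :: "nat list" and k :: nat
  assumes "\<pi> \<in> perms k"
  shows "avoidable (perms k - cyc \<pi>) \<and>
         (\<forall>\<Pi>. \<Pi> \<subseteq> perms k \<and> avoidable \<Pi> \<longrightarrow> card \<Pi> \<le> card (perms k - cyc \<pi>))"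
proof (cases "k = 0")
  case True
  then have pe: "\<pi> = []" "perms k = {[]}" using assms unfolding perms_def by auto
  have cp: "cyc [] = {[]}" unfolding cyc_def by auto
  have e: "perms k - cyc \<pi> = {}" using pe cp by simp
  have "avoidable {}"
    unfolding avoidable_def unavoidable_def
  proof
    assume "\<exists>N. \<forall>n\<ge>N. card (Av n {}) = 0"
    then obtain N where N: "card (Av N {}) = 0" by blast
    have "[0..<N] \<in> perms N" unfolding perms_def by simp
    then have "cyc [0..<N] \<in> Av N {}" unfolding Av_def by auto
    then show False using N Av_fin by (metis card_0_eq empty_iff)
  qed
  moreover have "card \<Pi> \<le> card (perms k - cyc \<pi>)" if "\<Pi> \<subseteq> perms k" "avoidable \<Pi>" for \<Pi>
  proof -
    have "[] \<notin> \<Pi>"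
    proof
      assume em: "[] \<in> \<Pi>"
      have "card (Av n \<Pi>) = 0" if "n \<ge> 1" for n
      proof -
        have "Av n \<Pi> = {}"
        proof (rule ccontr)
          assume "Av n \<Pi> \<noteq> {}"
          then obtain \<sigma> where "\<sigma> \<in> perms n" "\<not> cyc_contains \<sigma> []" using em unfolding Av_def by auto
          moreover have "length \<sigma> = n" using calculation perm_len by auto
          moreover have "cyc_contains \<sigma> []" unfolding cyc_contains_def order_iso_def
            using calculation(3) that by (auto intro!: exI[of _ 0])
          ultimately show False by blast
        qed
        then show ?thesis by simp
      qed
      then show False using \<open>avoidable \<Pi>\<close> unfolding avoidable_def unavoidable_def by blast
    qed
    then have "\<Pi> = {}" using that pe by auto
    then show ?thesis by simp
  qed
  ultimately show ?thesis unfolding e by auto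
next
  case False
  then have k: "k \<ge> 1" by simp
  have lpi: "length \<pi> = k" using assms perm_len by auto
  have "avoidable (perms k - cyc \<pi>)"
    unfolding avoidable_def unavoidable_def
  proof
    assume "\<exists>N. \<forall>n\<ge>N. card (Av n (perms k - cyc \<pi>)) = 0"
    then obtain N where N: "\<And>n. n \<ge> N \<Longrightarrow> card (Av n (perms k - cyc \<pi>)) = 0" by blast
    obtain \<sigma> where sp: "\<sigma> \<in> perms (Suc N * k)" and
      W: "\<forall>i<Suc N*k. \<exists>r. order_iso (take k (rotate i \<sigma>)) (rotate r \<pi>)"
      using constr[OF assms k, of "Suc N"] by auto
    have ls: "length \<sigma> = Suc N * k" using sp perm_len by auto
    have "\<not> cyc_contains \<sigma> p" if p: "p \<in> perms k - cyc \<pi>" for p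
    proof
      assume "cyc_contains \<sigma> p"
      then obtain i where i: "i < Suc N * k" "order_iso (take k (rotate i \<sigma>)) p"
        using p perm_len ls unfolding cyc_contains_def by auto
      obtain r where r: "order_iso (take k (rotate i \<sigma>)) (rotate r \<pi>)" using W i by blast
      have "rotate r \<pi> \<in> perms k" using assms unfolding perms_def by simp
      then have "p = rotate r \<pi>" using iso_perm_eq[of p k "rotate r \<pi>"] iso_trans_sym[OF i(2) r] p by auto
      then show False using p unfolding cyc_def by auto
    qed
    then have "cyc \<sigma> \<in> Av (Suc N * k) (perms k - cyc \<pi>)" using sp unfolding Av_def by auto
    moreover have "Suc N * 1 \<le> Suc N * k" using k by (rule mult_le_mono2)
    then have "Suc N * k \<ge> N" by simp
    ultimately show False using N Av_fin by (metis card_0_eq empty_iff)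
  qed
  moreover have "card \<Pi> \<le> card (perms k - cyc \<pi>)" if "\<Pi> \<subseteq> perms k" "avoidable \<Pi>" for \<Pi>
  proof -
    have "card \<Pi> + k \<le> card (perms k)" using max_part[OF that k] .
    moreover have "card (cyc \<pi>) \<le> k" "finite (cyc \<pi>)" using cyc_card[OF lpi k] by auto
    moreover have "card (perms k) - card (cyc \<pi>) \<le> card (perms k - cyc \<pi>)"
      using calculation(3) by (simp add: diff_card_le_card_Diff)
    ultimately show ?thesis by linarith
  qed
  ultimately show ?thesis by blast
qed

end
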